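(* Let $\mathcal{H}_A$ and $\mathcal{H}_B$ both have finite dimension $D$, let $|\psi\rangle\in\mathcal{H}_A\otimes\mathcal{H}_B$ be any vector, and let $A_k$ (operators on $\mathcal{H}_A$) and $B_k$ (operators on $\mathcal{H}_B$), $k=1,\dots,N$, be arbitrary. Let $R=\sum_{k=1}^N A_k^\dagger A_k\otimes B_k^\dagger B_k$ and $\|R\|=\sup_{\|\omega\|=1}\|R|\omega\rangle\|$ (its largest eigenvalue). Then for every $1\le n\le D$, $$\sum_{k=1}^N\chi_n\!\big(\mathrm{Tr}_A[(A_k\otimes B_k)|\psi\rangle\langle\psi|(A_k\otimes B_k)^\dagger]\big)\le\|R\|\,\chi_n\!\big(\mathrm{Tr}_A|\psi\rangle\langle\psi|\big).$$
   Context: For a Hermitian operator $T$ on a $D$-dimensional space, $\chi_n(T)$ denotes the sum of its $n$ smallest eigenvalues counted with multiplicity. $\mathrm{Tr}_A$ denotes the partial trace over $\mathcal{H}_A$, yielding an operator on $\mathcal{H}_B$. *)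

theory Defs
  imports "Jordan_Normal_Form.Char_Poly" "HOL-Library.Multiset"
begin

text \<open>Matrices are Jordan_Normal_Form complex matrices; the basis of
  H_A \<otimes> H_B (dims dA, dB) is indexed by i*dB + j for i < dA, j < dB.\<close>

definition adj :: "complex mat \<Rightarrow> complex mat" where
  "adj M = mat (dim_col M) (dim_row M) (\<lambda>(i,j). cnj (M $$ (j,i)))"

definition kron :: "complex mat \<Rightarrow> complex mat \<Rightarrow> complex mat" where
  "kron M P = mat (dim_row M * dim_row P) (dim_col M * dim_col P)
     (\<lambda>(i,j). M $$ (i div dim_row P, j div dim_col P) * P $$ (i mod dim_row P, j mod dim_col P))"

definition ptrace_A :: "nat \<Rightarrow> nat \<Rightarrow> complex mat \<Rightarrow> complex mat" where
  "ptrace_A dA dB M = mat dB dB (\<lambda>(j,j'). \<Sum>i<dA. M $$ (i*dB + j, i*dB + j'))"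

definition outer :: "complex vec \<Rightarrow> complex mat" where
  "outer v = mat (dim_vec v) (dim_vec v) (\<lambda>(i,j). v $ i * cnj (v $ j))"

definition msum :: "nat \<Rightarrow> ('k \<Rightarrow> complex mat) \<Rightarrow> 'k set \<Rightarrow> complex mat" where
  "msum d f K = mat d d (\<lambda>ij. \<Sum>k\<in>K. f k $$ ij)"

definition vnorm :: "complex vec \<Rightarrow> real" where
  "vnorm w = sqrt (\<Sum>i<dim_vec w. (cmod (w $ i))\<^sup>2)"

definition opnorm :: "complex mat \<Rightarrow> real" where
  "opnorm R = Sup {vnorm (R *\<^sub>v w) | w. w \<in> carrier_vec (dim_col R) \<and> vnorm w = 1}"

text \<open>Eigenvalues (with algebraic multiplicity = roots of the characteristic polynomial),
  as reals (real parts; the operators used are Hermitian), sorted increasingly.\<close>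
definition eigvals_sorted :: "complex mat \<Rightarrow> real list" where
  "eigvals_sorted T = sorted_list_of_multiset (image_mset Re (proots (char_poly T)))"

definition chi :: "nat \<Rightarrow> complex mat \<Rightarrow> real" where
  "chi n T = sum_list (take n (eigvals_sorted T))"

end

theory Submission
  imports Defs "HOL-Combinatorics.List_Permutation" "HOL-Computational_Algebra.Fundamental_Theorem_Algebra"
begin


definition ip :: "complex vec \<Rightarrow> complex vec \<Rightarrow> complex" where
  "ip x y = (\<Sum>i<dim_vec y. cnj (x $ i) * y $ i)"

definition nsq :: "complex vec \<Rightarrow> real" where
  "nsq x = (\<Sum>i<dim_vec x. (cmod (x $ i))^2)"

definition orthonormal :: "nat \<Rightarrow> nat \<Rightarrow> (nat \<Rightarrow> complex vec) \<Rightarrow> bool" where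
  "orthonormal D n u \<longleftrightarrow> (\<forall>l<n. u l \<in> carrier_vec D) \<and>
     (\<forall>l<n. \<forall>l'<n. ip (u l) (u l') = (if l = l' then 1 else 0))"

lemma cnj_mult_self: "cnj z * z = complex_of_real ((cmod z)^2)"
  by (metis complex_norm_square mult.commute of_real_power)

lemma ip_self: "ip x x = complex_of_real (nsq x)"
  unfolding ip_def nsq_def by (simp add: cnj_mult_self)

lemma nsq_nonneg: "nsq x \<ge> 0"
  unfolding nsq_def by (auto intro: sum_nonneg)

lemma ip_cnj: "dim_vec x = dim_vec y \<Longrightarrow> ip y x = cnj (ip x y)"
  unfolding ip_def by (simp add: mult.commute)

lemma ip_smult_right: "ip x (c \<cdot>\<^sub>v y) = c * ip x y"
  unfolding ip_def by (simp add: sum_distrib_left ac_simps)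

lemma ip_smult_left: "dim_vec x = dim_vec y \<Longrightarrow> ip (c \<cdot>\<^sub>v x) y = cnj c * ip x y"
  unfolding ip_def by (simp add: sum_distrib_left ac_simps)

lemma nsq_smult: "nsq (c \<cdot>\<^sub>v x) = (cmod c)^2 * nsq x"
  unfolding nsq_def by (simp add: sum_distrib_left norm_mult power_mult_distrib)

lemma ip_lin_right:
  assumes "\<And>j. j \<in> J \<Longrightarrow> dim_vec (u j) = D" "dim_vec x = D" "finite J"
  shows "ip x (vec D (\<lambda>i. \<Sum>j\<in>J. c j * u j $ i)) = (\<Sum>j\<in>J. c j * ip x (u j))"
  unfolding ip_def using assms
  by (simp add: sum_distrib_left sum_distrib_right ac_simps sum.swap[of _ J])

lemma ip_lin_left:
  assumes "\<And>j. j \<in> J \<Longrightarrow> dim_vec (u j) = D" "dim_vec y = D" "finite J"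
  shows "ip (vec D (\<lambda>i. \<Sum>j\<in>J. c j * u j $ i)) y = (\<Sum>j\<in>J. cnj (c j) * ip (u j) y)"
  unfolding ip_def using assms
  by (simp add: sum_distrib_left sum_distrib_right ac_simps sum.swap[of _ J])

lemma nsq_pos: assumes "x \<in> carrier_vec D" "x \<noteq> 0\<^sub>v D" shows "nsq x > 0"
proof -
  obtain i where i: "i < D" "x $ i \<noteq> 0" using assms by (metis carrier_vecD eq_vecI index_zero_vec(1,2))
  have "(cmod (x $ i))^2 \<le> nsq x" unfolding nsq_def
    by (rule member_le_sum[where f = "\<lambda>i. (cmod (x $ i))^2"]) (use i assms in auto)
  moreover have "(cmod (x $ i))^2 > 0" using i by simp
  ultimately show ?thesis by linarith
qed

lemma exists_orth:
  assumes "r < D" "\<forall>l<r. z l \<in> carrier_vec D"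
  shows "\<exists>x. x \<in> carrier_vec D \<and> x \<noteq> 0\<^sub>v D \<and> (\<forall>l<r. ip (z l) x = 0)"
proof -
  define c where "c = (\<lambda>i. if i < r then vec D (\<lambda>k. cnj (z i $ k)) else 0\<^sub>v D)"
  define Z where "Z = mat\<^sub>r D D (\<lambda>i. if i = r then 0\<^sub>v D else c i)"
  have "det Z = 0" unfolding Z_def by (rule det_row_0) (use assms in \<open>auto simp: c_def\<close>)
  moreover have Zc: "Z \<in> carrier_mat D D" unfolding Z_def by simp
  ultimately obtain v where v: "v \<in> carrier_vec D" "v \<noteq> 0\<^sub>v D" "Z *\<^sub>v v = 0\<^sub>v D"
    using det_0_iff_vec_prod_zero by blast
  have "ip (z l) v = 0" if l: "l < r" for l
  proof -
    have "(Z *\<^sub>v v) $ l = 0" using v l assms by simp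
    moreover have "(Z *\<^sub>v v) $ l = row Z l \<bullet> v" using l assms Zc by (simp add: index_mult_mat_vec)
    moreover have "row Z l = c l" unfolding Z_def using l assms
      by (subst row_mat_of_row_fun) (auto simp: c_def)
    moreover have "c l \<bullet> v = ip (z l) v" using l v assms unfolding c_def ip_def scalar_prod_def
      by (auto intro: sum.cong)
    ultimately show ?thesis by simp
  qed
  thus ?thesis using v by blast
qed

lemma orth_ext:
  assumes "n + m \<le> D" "\<forall>j<m. z j \<in> carrier_vec D"
  shows "\<exists>w. orthonormal D n w \<and> (\<forall>l<n. \<forall>j<m. ip (w l) (z j) = 0)"
  using assms(1)
proof (induction n)
  case 0 thus ?case by (auto simp: orthonormal_def)
next
  case (Suc n)
  then obtain w where w: "orthonormal D n w" "\<forall>l<n. \<forall>j<m. ip (w l) (z j) = 0" by auto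
  define z' where "z' = (\<lambda>t. if t < m then z t else w (t - m))"
  have "\<exists>x. x \<in> carrier_vec D \<and> x \<noteq> 0\<^sub>v D \<and> (\<forall>l<m+n. ip (z' l) x = 0)"
    by (rule exists_orth) (use Suc.prems assms(2) w(1) in \<open>auto simp: z'_def orthonormal_def\<close>)
  then obtain x where x: "x \<in> carrier_vec D" "x \<noteq> 0\<^sub>v D" "\<forall>l<m+n. ip (z' l) x = 0" by blast
  have np: "nsq x > 0" using nsq_pos x by blast
  define y where "y = complex_of_real (1 / sqrt (nsq x)) \<cdot>\<^sub>v x"
  have yc: "y \<in> carrier_vec D" using x unfolding y_def by simp
  have yy: "ip y y = 1"
  proof -
    have "(cmod (complex_of_real (1 / sqrt (nsq x))))^2 = 1 / nsq x" using np
      by (simp add: norm_divide power_divide real_sqrt_pow2 less_imp_le)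
    thus ?thesis unfolding y_def ip_self nsq_smult using np by simp
  qed
  have wy: "ip (w l) y = 0" if "l < n" for l
  proof -
    have "ip (z' (m + l)) x = 0" using x that by auto
    hence "ip (w l) x = 0" unfolding z'_def by simp
    thus ?thesis unfolding y_def ip_smult_right by simp
  qed
  have yw: "ip y (w l) = 0" if "l < n" for l
    using wy[OF that] ip_cnj[of "w l" y] w(1) yc that unfolding orthonormal_def by auto
  have yz: "ip y (z j) = 0" if "j < m" for j
  proof -
    have "ip (z' j) x = 0" using x that by auto
    hence "ip (z j) x = 0" using that unfolding z'_def by simp
    hence "ip (z j) y = 0" unfolding y_def ip_smult_right by simp
    thus ?thesis using ip_cnj[of "z j" y] yc assms(2) that by auto
  qed
  define w' where "w' = w(n := y)"
  have "orthonormal D (Suc n) w'"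
    unfolding orthonormal_def
  proof (intro conjI allI impI)
    fix l assume "l < Suc n" thus "w' l \<in> carrier_vec D" using w(1) yc
      unfolding w'_def orthonormal_def by (cases "l = n") auto
  next
    fix l l' assume "l < Suc n" "l' < Suc n"
    thus "ip (w' l) (w' l') = (if l = l' then 1 else 0)"
      using w(1) yy wy yw unfolding w'_def orthonormal_def
      by (cases "l = n"; cases "l' = n") auto
  qed
  moreover have "\<forall>l<Suc n. \<forall>j<m. ip (w' l) (z j) = 0"
    using w(2) yz unfolding w'_def by (auto simp: less_Suc_eq)
  ultimately show ?case by blast
qed


lemma complete:
  assumes e: "orthonormal D D e" and x: "x \<in> carrier_vec D" and i: "i < D"
  shows "x $ i = (\<Sum>t<D. ip (e t) x * e t $ i)"
proof -
  define E where "E = mat D D (\<lambda>(i,t). e t $ i)"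
  define Eh where "Eh = mat D D (\<lambda>(t,i). cnj (e t $ i))"
  have ec: "\<And>t. t < D \<Longrightarrow> dim_vec (e t) = D" using e unfolding orthonormal_def by auto
  have Ec: "E \<in> carrier_mat D D" "Eh \<in> carrier_mat D D" by (simp_all add: E_def Eh_def)
  have EhE: "Eh * E = 1\<^sub>m D"
  proof (rule eq_matI)
    fix a b assume ab: "a < dim_row (1\<^sub>m D)" "b < dim_col (1\<^sub>m D)"
    have "(Eh * E) $$ (a,b) = (\<Sum>k<D. cnj (e a $ k) * e b $ k)"
      using ab by (simp add: Eh_def E_def scalar_prod_def atLeast0LessThan)
    also have "\<dots> = ip (e a) (e b)" unfolding ip_def using ec ab by simp
    also have "\<dots> = 1\<^sub>m D $$ (a,b)" using e ab unfolding orthonormal_def by auto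
    finally show "(Eh * E) $$ (a,b) = 1\<^sub>m D $$ (a,b)" .
  qed (auto simp: Eh_def E_def)
  have EE: "E * Eh = 1\<^sub>m D" using mat_mult_left_right_inverse[OF Ec(2) Ec(1) EhE] .
  have "x $ i = ((E * Eh) *\<^sub>v x) $ i" using x i EE by (simp add: Ec)
  also have "\<dots> = (E *\<^sub>v (Eh *\<^sub>v x)) $ i" using Ec x by (simp add: assoc_mult_mat_vec)
  also have "\<dots> = (\<Sum>t<D. e t $ i * (\<Sum>k<D. cnj (e t $ k) * x $ k))"
    using i x Ec by (simp add: E_def Eh_def scalar_prod_def atLeast0LessThan)
  also have "\<dots> = (\<Sum>t<D. ip (e t) x * e t $ i)"
    unfolding ip_def using x by (simp add: mult.commute)
  finally show ?thesis .
qed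


lemma expand_vec:
  assumes e: "orthonormal D D e" and x: "x \<in> carrier_vec D"
  shows "x = vec D (\<lambda>i. \<Sum>t<D. ip (e t) x * e t $ i)"
  using complete[OF e x] x by (intro eq_vecI) auto

lemma ip_expand:
  assumes e: "orthonormal D D e" and x: "x \<in> carrier_vec D" and y: "y \<in> carrier_vec D"
  shows "ip x y = (\<Sum>t<D. cnj (ip (e t) x) * ip (e t) y)"
proof -
  have ec: "\<And>t. t \<in> {..<D} \<Longrightarrow> dim_vec (e t) = D" using e unfolding orthonormal_def by auto
  have "ip x y = ip x (vec D (\<lambda>i. \<Sum>t<D. ip (e t) y * e t $ i))"
    using expand_vec[OF e y] by simp
  also have "\<dots> = (\<Sum>t<D. ip (e t) y * ip x (e t))"
    by (rule ip_lin_right) (use ec x in auto)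
  also have "\<dots> = (\<Sum>t<D. cnj (ip (e t) x) * ip (e t) y)"
    by (intro sum.cong refl) (use ec x ip_cnj[of "e _" x] in auto)
  finally show ?thesis .
qed

lemma parseval:
  assumes e: "orthonormal D D e" and x: "x \<in> carrier_vec D"
  shows "nsq x = (\<Sum>t<D. (cmod (ip (e t) x))^2)"
proof -
  have "complex_of_real (nsq x) = (\<Sum>t<D. cnj (ip (e t) x) * ip (e t) x)"
    using ip_expand[OF e x x] ip_self by simp
  also have "\<dots> = complex_of_real (\<Sum>t<D. (cmod (ip (e t) x))^2)"
    by (simp add: cnj_mult_self)
  finally show ?thesis by (simp only: of_real_eq_iff)
qed

lemma orthonormal_extend:
  assumes u: "orthonormal D r u" and y: "y \<in> carrier_vec D" "ip y y = 1"
    and uy: "\<forall>j<r. ip (u j) y = 0"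
  shows "orthonormal D (Suc r) (u(r := y))"
proof -
  have yu: "ip y (u j) = 0" if "j < r" for j
    using uy that ip_cnj[of "u j" y] u y unfolding orthonormal_def by auto
  show ?thesis unfolding orthonormal_def
  proof (intro conjI allI impI)
    fix l assume "l < Suc r" thus "(u(r := y)) l \<in> carrier_vec D" using u y
      unfolding orthonormal_def by (cases "l = r") auto
  next
    fix l l' assume "l < Suc r" "l' < Suc r"
    thus "ip ((u(r := y)) l) ((u(r := y)) l') = (if l = l' then 1 else 0)"
      using u y uy yu unfolding orthonormal_def
      by (cases "l = r"; cases "l' = r") auto
  qed
qed

lemma orth_complete:
  assumes w: "orthonormal D n w" and n: "n \<le> D"
  shows "\<exists>e. orthonormal D D e \<and> (\<forall>t<n. e t = w t)"
proof -
  obtain w2 where w2: "orthonormal D (D - n) w2" "\<forall>l<D-n. \<forall>j<n. ip (w2 l) (w j) = 0"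
    using orth_ext[of "D - n" n D w] n w unfolding orthonormal_def by auto
  have w2': "ip (w j) (w2 l) = 0" if "l < D - n" "j < n" for l j
    using w2 that ip_cnj[of "w2 l" "w j"] w unfolding orthonormal_def by auto
  define e where "e = (\<lambda>t. if t < n then w t else w2 (t - n))"
  have "orthonormal D D e"
    unfolding orthonormal_def
  proof (intro conjI allI impI)
    fix l assume "l < D" thus "e l \<in> carrier_vec D" using w w2 unfolding e_def orthonormal_def by auto
  next
    fix l l' assume l: "l < D" "l' < D"
    show "ip (e l) (e l') = (if l = l' then 1 else 0)"
    proof (cases "l < n"; cases "l' < n")
      assume "l < n" "l' < n" thus ?thesis using w unfolding e_def orthonormal_def by auto
    next
      assume "l < n" "\<not> l' < n" thus ?thesis using w2' l unfolding e_def by auto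
    next
      assume "\<not> l < n" "l' < n" thus ?thesis using w2 l unfolding e_def by auto
    next
      assume a: "\<not> l < n" "\<not> l' < n"
      hence "(l - n = l' - n) = (l = l')" by auto
      thus ?thesis using w2 l a unfolding e_def orthonormal_def by auto
    qed
  qed
  thus ?thesis unfolding e_def by auto
qed

lemma bessel:
  assumes w: "orthonormal D n w" and n: "n \<le> D" and x: "x \<in> carrier_vec D"
  shows "(\<Sum>l<n. (cmod (ip (w l) x))^2) \<le> nsq x"
proof -
  obtain e where e: "orthonormal D D e" "\<forall>t<n. e t = w t" using orth_complete[OF w n] by blast
  have "(\<Sum>l<n. (cmod (ip (w l) x))^2) = (\<Sum>l<n. (cmod (ip (e l) x))^2)"
    using e(2) by simp
  also have "\<dots> \<le> (\<Sum>l<D. (cmod (ip (e l) x))^2)"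
    by (rule sum_mono2) (use n in auto)
  also have "\<dots> = nsq x" using parseval[OF e(1) x] by simp
  finally show ?thesis .
qed


definition herm :: "nat \<Rightarrow> complex mat \<Rightarrow> bool" where
  "herm D H \<longleftrightarrow> H \<in> carrier_mat D D \<and> (\<forall>i<D. \<forall>j<D. H $$ (i,j) = cnj (H $$ (j,i)))"

lemma mult_mat_vec_index:
  assumes "H \<in> carrier_mat D D" "x \<in> carrier_vec D" "i < D"
  shows "(H *\<^sub>v x) $ i = (\<Sum>j<D. H $$ (i,j) * x $ j)"
  using assms by (simp add: scalar_prod_def atLeast0LessThan)

lemma ip_herm:
  assumes h: "herm D H" and x: "x \<in> carrier_vec D" and y: "y \<in> carrier_vec D"
  shows "ip (H *\<^sub>v x) y = ip x (H *\<^sub>v y)"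
proof -
  have H: "H \<in> carrier_mat D D" using h unfolding herm_def by auto
  have "ip (H *\<^sub>v x) y = (\<Sum>i<D. cnj (\<Sum>j<D. H $$ (i,j) * x $ j) * y $ i)"
    unfolding ip_def using y H x by (simp add: mult_mat_vec_index del: index_mult_mat_vec)
  also have "\<dots> = (\<Sum>i<D. \<Sum>j<D. cnj (H$$(i,j)) * cnj (x$j) * y$i)"
    by (simp add: sum_distrib_right)
  also have "\<dots> = (\<Sum>i<D. \<Sum>j<D. cnj (x $ j) * (H $$ (j,i) * y $ i))"
  proof -
    have hs: "\<And>i j. i < D \<Longrightarrow> j < D \<Longrightarrow> cnj (H $$ (i,j)) = H $$ (j,i)"
      using h unfolding herm_def by (metis complex_cnj_cnj)
    show ?thesis by (intro sum.cong refl) (simp add: hs)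
  qed
  also have "\<dots> = (\<Sum>j<D. \<Sum>i<D. cnj (x $ j) * (H $$ (j,i) * y $ i))"
    by (rule sum.swap)
  also have "\<dots> = (\<Sum>j<D. cnj (x$j) * (\<Sum>i<D. H$$(j,i) * y$i))" by (simp add: sum_distrib_left)
  also have "\<dots> = ip x (H *\<^sub>v y)"
    unfolding ip_def using y H x by (simp add: mult_mat_vec_index del: index_mult_mat_vec)
  finally show ?thesis .
qed

lemma eig_exists:
  assumes A: "(A :: complex mat) \<in> carrier_mat m m" and m: "0 < m"
  shows "\<exists>k v. eigenvector A v k"
proof -
  have "degree (char_poly A) = m" using degree_monic_char_poly[OF A] by simp
  hence "\<not> constant (poly (char_poly A))" using m constant_degree[of "char_poly A"] by auto
  then obtain z where "poly (char_poly A) z = 0" using fundamental_theorem_of_algebra by blast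
  hence "eigenvalue A z" using eigenvalue_root_char_poly[OF A] by simp
  thus ?thesis unfolding eigenvalue_def by blast
qed

lemma sum_split_nat:
  "(\<Sum>t<r+k. f t) = (\<Sum>t<r. f t) + (\<Sum>a<k. f (r+a))" for r k :: nat
  by (induction k) (auto simp: add.assoc)

lemma mat_vec_lin:
  fixes H :: "complex mat"
  assumes H: "H \<in> carrier_mat D D" and u: "\<And>j. j \<in> J \<Longrightarrow> u j \<in> carrier_vec D" and J: "finite J"
  shows "H *\<^sub>v vec D (\<lambda>i. \<Sum>j\<in>J. c j * u j $ i) = vec D (\<lambda>i. \<Sum>j\<in>J. c j * (H *\<^sub>v u j) $ i)"
proof (rule eq_vecI)
  fix i assume "i < dim_vec (vec D (\<lambda>i. \<Sum>j\<in>J. c j * (H *\<^sub>v u j) $ i))"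
  hence i: "i < D" by simp
  have "(H *\<^sub>v vec D (\<lambda>i. \<Sum>j\<in>J. c j * u j $ i)) $ i = (\<Sum>k<D. H $$ (i,k) * (\<Sum>j\<in>J. c j * u j $ k))"
    using H i by (simp add: mult_mat_vec_index del: index_mult_mat_vec)
  also have "\<dots> = (\<Sum>k<D. \<Sum>j\<in>J. H $$ (i,k) * (c j * u j $ k))"
    by (simp add: sum_distrib_left)
  also have "\<dots> = (\<Sum>k<D. \<Sum>j\<in>J. c j * (H $$ (i,k) * u j $ k))"
    by (intro sum.cong refl) (simp add: algebra_simps)
  also have "\<dots> = (\<Sum>j\<in>J. \<Sum>k<D. c j * (H $$ (i,k) * u j $ k))"
    by (rule sum.swap)
  also have "\<dots> = (\<Sum>j\<in>J. c j * (H *\<^sub>v u j) $ i)"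
    using H i u by (intro sum.cong refl) (simp add: mult_mat_vec_index sum_distrib_left u del: index_mult_mat_vec)
  finally show "(H *\<^sub>v vec D (\<lambda>i. \<Sum>j\<in>J. c j * u j $ i)) $ i = vec D (\<lambda>i. \<Sum>j\<in>J. c j * (H *\<^sub>v u j) $ i) $ i"
    using i by simp
qed (use H in simp)



lemma real_of_cnj_eq: "cnj z = z \<Longrightarrow> z = complex_of_real (Re z)"
  by (simp add: complex_eq_iff)

lemma spectral_step:
  assumes h: "herm D H" and r: "r \<le> D"
  shows "\<exists>u lam. orthonormal D r u \<and> (\<forall>j<r. H *\<^sub>v u j = complex_of_real (lam j) \<cdot>\<^sub>v u j)"
  using r
proof (induction r)
  case 0 thus ?case by (auto simp: orthonormal_def)
next
  case (Suc r)
  then obtain u lam where u: "orthonormal D r u"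
    and ev: "\<forall>j<r. H *\<^sub>v u j = complex_of_real (lam j) \<cdot>\<^sub>v u j" by auto
  have r: "r < D" using Suc.prems by simp
  have H: "H \<in> carrier_mat D D" using h herm_def by auto
  have uc: "\<And>j. j < r \<Longrightarrow> u j \<in> carrier_vec D" using u orthonormal_def by auto
  obtain w where w: "orthonormal D (D - r) w" and wu: "\<forall>a<D-r. \<forall>j<r. ip (w a) (u j) = 0"
    using orth_ext[of "D - r" r D u] r uc by auto
  have wc: "\<And>a. a < D - r \<Longrightarrow> w a \<in> carrier_vec D" using w orthonormal_def by auto
  have uw: "ip (u j) (w a) = 0" if "j < r" "a < D - r" for j a
    using wu that ip_cnj[of "w a" "u j"] wc[OF that(2)] uc[OF that(1)] by auto
  define e where "e = (\<lambda>t. if t < r then u t else w (t - r))"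
  have e: "orthonormal D D e"
    unfolding orthonormal_def
  proof (intro conjI allI impI)
    fix l assume "l < D" thus "e l \<in> carrier_vec D" using uc wc unfolding e_def by auto
  next
    fix l l' assume l: "l < D" "l' < D"
    show "ip (e l) (e l') = (if l = l' then 1 else 0)"
    proof (cases "l < r"; cases "l' < r")
      assume "l < r" "l' < r" thus ?thesis using u unfolding e_def orthonormal_def by auto
    next
      assume "l < r" "\<not> l' < r" thus ?thesis using uw l unfolding e_def by auto
    next
      assume "\<not> l < r" "l' < r" thus ?thesis using wu l unfolding e_def by auto
    next
      assume a: "\<not> l < r" "\<not> l' < r"
      hence "(l - r = l' - r) = (l = l')" by auto
      thus ?thesis using w l a unfolding e_def orthonormal_def by auto
    qed
  qed
  define Hp where "Hp = mat (D-r) (D-r) (\<lambda>(a,b). ip (w a) (H *\<^sub>v w b))"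
  have Hpc: "Hp \<in> carrier_mat (D-r) (D-r)" by (simp add: Hp_def)
  obtain \<mu> x where ex: "eigenvector Hp x \<mu>" using eig_exists[OF Hpc] r by auto
  hence xc: "x \<in> carrier_vec (D-r)" and x0: "x \<noteq> 0\<^sub>v (D-r)" and xe: "Hp *\<^sub>v x = \<mu> \<cdot>\<^sub>v x"
    unfolding eigenvector_def using Hpc by auto
  define v where "v = vec D (\<lambda>i. \<Sum>a<D-r. x $ a * w a $ i)"
  have vc: "v \<in> carrier_vec D" by (simp add: v_def)
  have uv: "ip (u j) v = 0" if "j < r" for j
  proof -
    have "ip (u j) v = (\<Sum>a<D-r. x $ a * ip (u j) (w a))"
      unfolding v_def by (rule ip_lin_right) (use wc uc that in auto)
    also have "\<dots> = 0" using uw that by simp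
    finally show ?thesis .
  qed
  have wv: "ip (w b) v = x $ b" if "b < D - r" for b
  proof -
    have "ip (w b) v = (\<Sum>a<D-r. x $ a * ip (w b) (w a))"
      unfolding v_def by (rule ip_lin_right) (use wc that in auto)
    also have "\<dots> = (\<Sum>a<D-r. x $ a * (if b = a then 1 else 0))"
      using w that unfolding orthonormal_def by (intro sum.cong refl) auto
    also have "\<dots> = x $ b" using that by (simp add: if_distrib cong: if_cong)
    finally show ?thesis .
  qed
  have vv: "ip v v = complex_of_real (nsq x)"
  proof -
    have "ip v v = (\<Sum>a<D-r. cnj (x $ a) * ip (w a) v)"
      using ip_lin_left[where J="{..<D-r}" and u=w and c="vec_index x" and y=v and D=D] wc vc
      unfolding v_def by auto
    also have "\<dots> = (\<Sum>a<D-r. cnj (x $ a) * x $ a)" using wv by simp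
    also have "\<dots> = complex_of_real (nsq x)" unfolding nsq_def using xc by (simp add: cnj_mult_self)
    finally show ?thesis .
  qed
  have nx: "nsq x > 0" using nsq_pos[OF xc x0] .
  have Hw: "H *\<^sub>v w b = vec D (\<lambda>i. \<Sum>a<D-r. Hp $$ (a,b) * w a $ i)" if b: "b < D - r" for b
  proof (rule eq_vecI)
    fix i assume "i < dim_vec (vec D (\<lambda>i. \<Sum>a<D-r. Hp $$ (a,b) * w a $ i))"
    hence i: "i < D" by simp
    have Hwc: "H *\<^sub>v w b \<in> carrier_vec D" using H wc b by simp
    have "(H *\<^sub>v w b) $ i = (\<Sum>t<r + (D - r). ip (e t) (H *\<^sub>v w b) * e t $ i)"
      using complete[OF e Hwc i] r by simp
    also have "\<dots> = (\<Sum>t<r. ip (e t) (H *\<^sub>v w b) * e t $ i) + (\<Sum>a<D-r. ip (e (r+a)) (H *\<^sub>v w b) * e (r+a) $ i)"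
      by (rule sum_split_nat)
    also have "(\<Sum>t<r. ip (e t) (H *\<^sub>v w b) * e t $ i) = 0"
    proof (rule sum.neutral, intro ballI)
      fix t assume "t \<in> {..<r}"
      hence t: "t < r" by simp
      have "ip (u t) (H *\<^sub>v w b) = ip (H *\<^sub>v u t) (w b)"
        using ip_herm[OF h uc[OF t] wc[OF b]] by simp
      also have "\<dots> = cnj (complex_of_real (lam t)) * ip (u t) (w b)"
        using ev t uc[OF t] wc[OF b] by (simp add: ip_smult_left)
      also have "\<dots> = 0" using uw[OF t b] by simp
      finally show "ip (e t) (H *\<^sub>v w b) * e t $ i = 0" using t unfolding e_def by simp
    qed
    also have "(\<Sum>a<D-r. ip (e (r+a)) (H *\<^sub>v w b) * e (r+a) $ i) = (\<Sum>a<D-r. Hp $$ (a,b) * w a $ i)"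
      using b unfolding e_def Hp_def by (intro sum.cong refl) auto
    finally show "(H *\<^sub>v w b) $ i = vec D (\<lambda>i. \<Sum>a<D-r. Hp $$ (a,b) * w a $ i) $ i" using i by simp
  qed (use H in simp)
  have Hv: "H *\<^sub>v v = \<mu> \<cdot>\<^sub>v v"
  proof -
    have "H *\<^sub>v v = vec D (\<lambda>i. \<Sum>a<D-r. x $ a * (H *\<^sub>v w a) $ i)"
      unfolding v_def by (rule mat_vec_lin) (use H wc in auto)
    also have "\<dots> = vec D (\<lambda>i. \<Sum>a<D-r. x $ a * (\<Sum>b<D-r. Hp $$ (b,a) * w b $ i))"
      by (intro eq_vecI) (auto simp: Hw intro!: sum.cong)
    also have "\<dots> = vec D (\<lambda>i. \<Sum>b<D-r. (\<Sum>a<D-r. Hp $$ (b,a) * x $ a) * w b $ i)"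
    proof -
      have "\<And>i. (\<Sum>a<D-r. x $ a * (\<Sum>b<D-r. Hp $$ (b,a) * w b $ i))
          = (\<Sum>a<D-r. \<Sum>b<D-r. Hp $$ (b,a) * x $ a * w b $ i)"
        by (simp add: sum_distrib_left ac_simps)
      moreover have "\<And>i. (\<Sum>a<D-r. \<Sum>b<D-r. Hp $$ (b,a) * x $ a * w b $ i)
          = (\<Sum>b<D-r. \<Sum>a<D-r. Hp $$ (b,a) * x $ a * w b $ i)"
        by (rule sum.swap)
      moreover have "\<And>i. (\<Sum>b<D-r. \<Sum>a<D-r. Hp $$ (b,a) * x $ a * w b $ i)
          = (\<Sum>b<D-r. (\<Sum>a<D-r. Hp $$ (b,a) * x $ a) * w b $ i)"
        by (simp add: sum_distrib_right)
      ultimately show ?thesis by simp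
    qed
    also have "\<dots> = vec D (\<lambda>i. \<Sum>b<D-r. (\<mu> * x $ b) * w b $ i)"
    proof -
      have "\<And>b. b < D - r \<Longrightarrow> (\<Sum>a<D-r. Hp $$ (b,a) * x $ a) = \<mu> * x $ b"
      proof -
        fix b assume b: "b < D - r"
        have "(Hp *\<^sub>v x) $ b = (\<Sum>a<D-r. Hp $$ (b,a) * x $ a)"
          using Hpc xc b by (simp add: mult_mat_vec_index del: index_mult_mat_vec)
        thus "(\<Sum>a<D-r. Hp $$ (b,a) * x $ a) = \<mu> * x $ b" using xe xc b by simp
      qed
      thus ?thesis by (intro eq_vecI) (auto intro!: sum.cong)
    qed
    also have "\<dots> = \<mu> \<cdot>\<^sub>v v" unfolding v_def
      by (intro eq_vecI) (auto simp: sum_distrib_left ac_simps)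
    finally show ?thesis .
  qed
  have "ip v (H *\<^sub>v v) = ip (H *\<^sub>v v) v" using ip_herm[OF h vc vc] by simp
  hence "\<mu> * ip v v = cnj \<mu> * ip v v" unfolding Hv using vc by (simp add: ip_smult_left ip_smult_right)
  hence "cnj \<mu> = \<mu>" using vv nx by simp
  hence mu: "\<mu> = complex_of_real (Re \<mu>)" by (rule real_of_cnj_eq)
  define y where "y = complex_of_real (1 / sqrt (nsq x)) \<cdot>\<^sub>v v"
  have yc: "y \<in> carrier_vec D" using vc unfolding y_def by simp
  have nv: "nsq v = nsq x" using vv ip_self[of v] by simp
  have yy: "ip y y = 1"
  proof -
    have "(cmod (complex_of_real (1 / sqrt (nsq x))))^2 = 1 / nsq x" using nx
      by (simp add: norm_divide power_divide real_sqrt_pow2 less_imp_le)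
    thus ?thesis unfolding y_def ip_self nsq_smult nv using nx by simp
  qed
  have Hy: "H *\<^sub>v y = complex_of_real (Re \<mu>) \<cdot>\<^sub>v y"
  proof -
    have "H *\<^sub>v y = complex_of_real (1 / sqrt (nsq x)) \<cdot>\<^sub>v (H *\<^sub>v v)"
      unfolding y_def using H vc by (simp add: mult_mat_vec)
    also have "\<dots> = complex_of_real (Re \<mu>) \<cdot>\<^sub>v y"
      unfolding Hv y_def using mu by (intro eq_vecI) auto
    finally show ?thesis .
  qed
  have uy: "\<forall>j<r. ip (u j) y = 0" using uv unfolding y_def by (simp add: ip_smult_right)
  have "orthonormal D (Suc r) (u(r := y))" by (rule orthonormal_extend[OF u yc yy uy])
  moreover have "\<forall>j<Suc r. H *\<^sub>v (u(r := y)) j = complex_of_real ((lam(r := Re \<mu>)) j) \<cdot>\<^sub>v (u(r := y)) j"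
    using ev Hy by (auto simp: less_Suc_eq)
  ultimately show ?case by blast
qed

lemma spectral:
  assumes h: "herm D H"
  shows "\<exists>u lam. orthonormal D D u \<and> (\<forall>j<D. H *\<^sub>v u j = complex_of_real (lam j) \<cdot>\<^sub>v u j)"
  using spectral_step[OF h le_refl] .



lemma unitary_E:
  assumes e: "orthonormal D D e"
  defines "E \<equiv> mat D D (\<lambda>(i,t). e t $ i)" and "Eh \<equiv> mat D D (\<lambda>(t,i). cnj (e t $ i))"
  shows "E * Eh = 1\<^sub>m D" "Eh * E = 1\<^sub>m D"
proof -
  have ec: "\<And>t. t < D \<Longrightarrow> dim_vec (e t) = D" using e unfolding orthonormal_def by auto
  have Ec: "E \<in> carrier_mat D D" "Eh \<in> carrier_mat D D" by (simp_all add: E_def Eh_def)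
  show EhE: "Eh * E = 1\<^sub>m D"
  proof (rule eq_matI)
    fix a b assume ab: "a < dim_row (1\<^sub>m D)" "b < dim_col (1\<^sub>m D)"
    have "(Eh * E) $$ (a,b) = (\<Sum>k<D. cnj (e a $ k) * e b $ k)"
      using ab by (simp add: Eh_def E_def scalar_prod_def atLeast0LessThan)
    also have "\<dots> = ip (e a) (e b)" unfolding ip_def using ec ab by simp
    also have "\<dots> = 1\<^sub>m D $$ (a,b)" using e ab unfolding orthonormal_def by auto
    finally show "(Eh * E) $$ (a,b) = 1\<^sub>m D $$ (a,b)" .
  qed (auto simp: Eh_def E_def)
  show "E * Eh = 1\<^sub>m D" using mat_mult_left_right_inverse[OF Ec(2) Ec(1) EhE] .
qed

lemma charpoly_spec:
  assumes H: "H \<in> carrier_mat D D" and u: "orthonormal D D u"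
    and ev: "\<forall>j<D. H *\<^sub>v u j = complex_of_real (lam j) \<cdot>\<^sub>v u j"
  shows "char_poly H = (\<Prod>a\<leftarrow>map (\<lambda>j. complex_of_real (lam j)) [0..<D]. [:-a, 1:])"
proof -
  define E where "E = mat D D (\<lambda>(i,t). u t $ i)"
  define Eh where "Eh = mat D D (\<lambda>(t,i). cnj (u t $ i))"
  define L where "L = mat D D (\<lambda>(i,j). if i = j then complex_of_real (lam i) else 0)"
  have Ec: "E \<in> carrier_mat D D" "Eh \<in> carrier_mat D D" "L \<in> carrier_mat D D"
    by (simp_all add: E_def Eh_def L_def)
  have EE: "E * Eh = 1\<^sub>m D" "Eh * E = 1\<^sub>m D" using unitary_E[OF u] unfolding E_def Eh_def by auto
  have uc: "\<And>t. t < D \<Longrightarrow> u t \<in> carrier_vec D" using u unfolding orthonormal_def by auto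
  have HE: "H * E = E * L"
  proof (rule eq_matI)
    fix i t assume it: "i < dim_row (E * L)" "t < dim_col (E * L)"
    hence i: "i < D" and t: "t < D" using Ec by auto
    have "(H * E) $$ (i,t) = (\<Sum>k<D. H $$ (i,k) * u t $ k)"
      using H i t by (simp add: E_def scalar_prod_def atLeast0LessThan)
    also have "\<dots> = (H *\<^sub>v u t) $ i"
      using H i uc[OF t] by (simp add: mult_mat_vec_index del: index_mult_mat_vec)
    also have "\<dots> = complex_of_real (lam t) * u t $ i" using ev t i uc[OF t] by simp
    also have "\<dots> = (E * L) $$ (i,t)"
      using i t by (simp add: E_def L_def scalar_prod_def atLeast0LessThan if_distrib cong: if_cong)
    finally show "(H * E) $$ (i,t) = (E * L) $$ (i,t)" .
  qed (use H Ec in auto)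
  have "H = H * (E * Eh)" using EE H by simp
  also have "\<dots> = (H * E) * Eh" using H Ec by (simp add: assoc_mult_mat)
  also have "\<dots> = E * L * Eh" unfolding HE ..
  finally have "similar_mat H L" using EE H Ec by (intro similar_matI[of H L E Eh D]) auto
  hence "char_poly H = char_poly L" by (rule char_poly_similar)
  also have "\<dots> = (\<Prod>a\<leftarrow>diag_mat L. [:-a, 1:])"
    by (rule char_poly_upper_triangular[OF Ec(3)]) (simp add: upper_triangular_def L_def)
  also have "diag_mat L = map (\<lambda>j. complex_of_real (lam j)) [0..<D]"
    unfolding diag_mat_def L_def by simp
  finally show ?thesis .
qed

lemma proots_lin: "proots (\<Prod>a\<leftarrow>L. [:-a, 1:]) = mset (L :: complex list)"
proof (induction L)
  case Nil thus ?case by simp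
next
  case (Cons a L)
  have nz: "(\<Prod>a\<leftarrow>L. [:-a, 1:]) \<noteq> 0" by (subst prod_list_zero_iff) auto
  have "proots ([:-a, 1:] * (\<Prod>a\<leftarrow>L. [:-a, 1:])) = proots [:-a, 1:] + proots (\<Prod>a\<leftarrow>L. [:-a, 1:])"
    by (rule proots_mult) (use nz in auto)
  moreover have "proots [:-a, 1:] = {#a#}" using proots_linear_factor[of "-a"] by simp
  ultimately show ?case using Cons by simp
qed

lemma eigvals_spec:
  assumes H: "H \<in> carrier_mat D D" and u: "orthonormal D D u"
    and ev: "\<forall>j<D. H *\<^sub>v u j = complex_of_real (lam j) \<cdot>\<^sub>v u j"
  shows "eigvals_sorted H = sort (map lam [0..<D])"
proof -
  have X: "image_mset Re (proots (char_poly H)) = mset (map lam [0..<D])"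
    unfolding charpoly_spec[OF H u ev] proots_lin by (simp add: multiset.map_comp o_def)
  show ?thesis unfolding eigvals_sorted_def X by (rule sorted_list_of_multiset_mset)
qed

lemma select_smallest:
  fixes L :: "real list" assumes n: "n \<le> length L"
  shows "\<exists>S. S \<subseteq> {..<length L} \<and> card S = n \<and> (\<forall>j\<in>S. \<forall>j'\<in>{..<length L}-S. L!j \<le> L!j')
     \<and> sum_list (take n (sort L)) = (\<Sum>j\<in>S. L!j)"
proof -
  have "mset L = mset (sort L)" by simp
  then obtain f where f: "bij_betw f {..<length L} {..<length (sort L)}"
    and fL: "\<forall>i<length L. L ! i = sort L ! (f i)"
    using permutation_Ex_bij by blast
  define S where "S = {i. i < length L \<and> f i < n}"
  have fS: "f ` S = {..<n}"
  proof
    show "f ` S \<subseteq> {..<n}" unfolding S_def by auto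
  next
    show "{..<n} \<subseteq> f ` S"
    proof
      fix k assume "k \<in> {..<n}"
      hence k: "k < n" by simp
      hence "k \<in> f ` {..<length L}" using f n unfolding bij_betw_def by auto
      then obtain i where "i < length L" "k = f i" by auto
      thus "k \<in> f ` S" unfolding S_def using k by auto
    qed
  qed
  have inj: "inj_on f S" using f unfolding bij_betw_def S_def by (auto intro: inj_on_subset)
  have cS: "card S = n" using card_image[OF inj] fS by simp
  have ord: "\<forall>j\<in>S. \<forall>j'\<in>{..<length L}-S. L!j \<le> L!j'"
  proof (intro ballI)
    fix j j' assume j: "j \<in> S" and j': "j' \<in> {..<length L} - S"
    have "f j' < length L" using f j' unfolding bij_betw_def by auto
    moreover have "f j \<le> f j'" using j j' unfolding S_def by auto
    ultimately have "sort L ! (f j) \<le> sort L ! (f j')" by (intro sorted_nth_mono) auto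
    thus "L!j \<le> L!j'" using fL j j' unfolding S_def by auto
  qed
  have "sum_list (take n (sort L)) = (\<Sum>k<n. sort L ! k)"
    using n by (simp add: sum_list_sum_nth atLeast0LessThan)
  also have "\<dots> = (\<Sum>j\<in>S. sort L ! (f j))"
    using sum.reindex[OF inj, of "\<lambda>k. sort L ! k"] fS by simp
  also have "\<dots> = (\<Sum>j\<in>S. L ! j)" using fL unfolding S_def by (intro sum.cong refl) auto
  finally have sm: "sum_list (take n (sort L)) = (\<Sum>j\<in>S. L ! j)" .
  have "S \<subseteq> {..<length L}" unfolding S_def by auto
  thus ?thesis using cS ord sm by blast
qed

lemma chi_spec:
  assumes h: "herm D H" and n: "n \<le> D"
  shows "\<exists>u lam S. orthonormal D D u \<and> (\<forall>j<D. H *\<^sub>v u j = complex_of_real (lam j) \<cdot>\<^sub>v u j)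
     \<and> S \<subseteq> {..<D} \<and> card S = n \<and> (\<forall>j\<in>S. \<forall>j'\<in>{..<D}-S. lam j \<le> lam j')
     \<and> chi n H = (\<Sum>j\<in>S. lam j)"
proof -
  have H: "H \<in> carrier_mat D D" using h herm_def by auto
  obtain u lam where u: "orthonormal D D u" and ev: "\<forall>j<D. H *\<^sub>v u j = complex_of_real (lam j) \<cdot>\<^sub>v u j"
    using spectral[OF h] by blast
  obtain S where S: "S \<subseteq> {..<D}" "card S = n" "\<forall>j\<in>S. \<forall>j'\<in>{..<D}-S. map lam [0..<D] ! j \<le> map lam [0..<D] ! j'"
    "sum_list (take n (sort (map lam [0..<D]))) = (\<Sum>j\<in>S. map lam [0..<D] ! j)"
    using select_smallest[of n "map lam [0..<D]", unfolded length_map length_upt diff_zero] n by blast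
  have "chi n H = (\<Sum>j\<in>S. lam j)"
    unfolding chi_def eigvals_spec[OF H u ev] S(4) using S(1) by (intro sum.cong refl) auto
  moreover have "\<forall>j\<in>S. \<forall>j'\<in>{..<D}-S. lam j \<le> lam j'"
  proof (intro ballI)
    fix j j' assume j: "j \<in> S" and j': "j' \<in> {..<D}-S"
    have "map lam [0..<D] ! j \<le> map lam [0..<D] ! j'" using S(3) j j' by blast
    moreover have "j < D" "j' < D" using j j' S(1) by auto
    ultimately show "lam j \<le> lam j'" by simp
  qed
  ultimately show ?thesis using u ev S(1,2) by blast
qed



lemma threshold:
  fixes lam C :: "nat \<Rightarrow> real"
  assumes I: "finite I" and S: "S \<subseteq> I" "card S = n" "1 \<le> n"
    and ord: "\<forall>j\<in>S. \<forall>j'\<in>I-S. lam j \<le> lam j'"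
    and C: "\<And>j. j \<in> I \<Longrightarrow> 0 \<le> C j" "\<And>j. j \<in> I \<Longrightarrow> C j \<le> 1"
    and sC: "(\<Sum>j\<in>I. C j) = n"
  shows "(\<Sum>j\<in>S. lam j) \<le> (\<Sum>j\<in>I. lam j * C j)"
proof -
  have fS: "finite S" using I S(1) finite_subset by blast
  have neS: "S \<noteq> {}" using S(2,3) by auto
  define t where "t = Max (lam ` S)"
  have tS: "\<And>j. j \<in> S \<Longrightarrow> lam j \<le> t" unfolding t_def using fS by auto
  have "t \<in> lam ` S" unfolding t_def using fS neS by (intro Max_in) auto
  then obtain j0 where j0: "j0 \<in> S" "t = lam j0" by auto
  have tI: "\<And>j. j \<in> I - S \<Longrightarrow> t \<le> lam j" using ord j0 by auto
  have split: "(\<Sum>j\<in>I. lam j * C j) = (\<Sum>j\<in>S. lam j * C j) + (\<Sum>j\<in>I-S. lam j * C j)"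
    by (metis add.commute sum.subset_diff[OF S(1) I])
  have splitC: "(\<Sum>j\<in>I. C j) = (\<Sum>j\<in>S. C j) + (\<Sum>j\<in>I-S. C j)"
    by (metis add.commute sum.subset_diff[OF S(1) I])
  have a: "(\<Sum>j\<in>S. t * (C j - 1)) \<le> (\<Sum>j\<in>S. lam j * (C j - 1))"
  proof (rule sum_mono)
    fix j assume j: "j \<in> S"
    have "C j - 1 \<le> 0" using C(2) j S(1) by auto
    with tS[OF j] show "t * (C j - 1) \<le> lam j * (C j - 1)" by (rule mult_right_mono_neg)
  qed
  have b: "(\<Sum>j\<in>I-S. t * C j) \<le> (\<Sum>j\<in>I-S. lam j * C j)"
  proof (rule sum_mono)
    fix j assume j: "j \<in> I - S"
    thus "t * C j \<le> lam j * C j" using tI[OF j] C(1) by (auto intro: mult_right_mono)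
  qed
  have "(\<Sum>j\<in>S. t * (C j - 1)) + (\<Sum>j\<in>I-S. t * C j) = t * ((\<Sum>j\<in>I. C j) - card S)"
    unfolding splitC by (simp add: sum_distrib_left[symmetric] sum_subtractf algebra_simps)
  also have "\<dots> = 0" using sC S(2) by simp
  finally have z: "(\<Sum>j\<in>S. t * (C j - 1)) + (\<Sum>j\<in>I-S. t * C j) = 0" .
  have "(\<Sum>j\<in>S. lam j * (C j - 1)) = (\<Sum>j\<in>S. lam j * C j) - (\<Sum>j\<in>S. lam j)"
    by (simp add: algebra_simps sum_subtractf)
  thus ?thesis using a b z split by linarith
qed

lemma kyfan:
  assumes h: "herm D T" and n: "1 \<le> n" "n \<le> D" and w: "orthonormal D n w"
  shows "chi n T \<le> (\<Sum>l<n. Re (ip (w l) (T *\<^sub>v w l)))"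
proof -
  obtain u lam S where u: "orthonormal D D u"
    and ev: "\<forall>j<D. T *\<^sub>v u j = complex_of_real (lam j) \<cdot>\<^sub>v u j"
    and S: "S \<subseteq> {..<D}" "card S = n" "\<forall>j\<in>S. \<forall>j'\<in>{..<D}-S. lam j \<le> lam j'"
    and chi: "chi n T = (\<Sum>j\<in>S. lam j)"
    using chi_spec[OF h n(2)] by blast
  have Tc: "T \<in> carrier_mat D D" using h herm_def by auto
  have uc: "\<And>t. t < D \<Longrightarrow> u t \<in> carrier_vec D" using u orthonormal_def by auto
  have wc: "\<And>l. l < n \<Longrightarrow> w l \<in> carrier_vec D" using w orthonormal_def by auto
  define a where "a = (\<lambda>t l. (cmod (ip (u t) (w l)))^2)"
  define C where "C = (\<lambda>t. \<Sum>l<n. a t l)"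
  have tm: "Re (ip (w l) (T *\<^sub>v w l)) = (\<Sum>t<D. lam t * a t l)" if l: "l < n" for l
  proof -
    have Twc: "T *\<^sub>v w l \<in> carrier_vec D" using Tc wc[OF l] by simp
    have "ip (w l) (T *\<^sub>v w l) = (\<Sum>t<D. cnj (ip (u t) (w l)) * ip (u t) (T *\<^sub>v w l))"
      by (rule ip_expand[OF u wc[OF l] Twc])
    also have "\<dots> = (\<Sum>t<D. complex_of_real (lam t * a t l))"
    proof (intro sum.cong refl)
      fix t assume "t \<in> {..<D}"
      hence t: "t < D" by simp
      have "ip (u t) (T *\<^sub>v w l) = ip (T *\<^sub>v u t) (w l)"
        using ip_herm[OF h uc[OF t] wc[OF l]] by simp
      also have "\<dots> = complex_of_real (lam t) * ip (u t) (w l)"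
        using ev t uc[OF t] wc[OF l] by (simp add: ip_smult_left)
      finally show "cnj (ip (u t) (w l)) * ip (u t) (T *\<^sub>v w l) = complex_of_real (lam t * a t l)"
        unfolding a_def of_real_mult complex_norm_square by (simp add: ac_simps)
    qed
    finally show ?thesis by (simp only: Re_complex_of_real of_real_sum[symmetric])
  qed
  have C1: "C t \<le> 1" if t: "t < D" for t
  proof -
    have "C t = (\<Sum>l<n. (cmod (ip (w l) (u t)))^2)"
      unfolding C_def a_def using uc[OF t] wc ip_cnj by (intro sum.cong refl) (metis complex_mod_cnj lessThan_iff carrier_vecD)
    also have "\<dots> \<le> nsq (u t)" by (rule bessel[OF w n(2) uc[OF t]])
    also have "nsq (u t) = 1" using u t ip_self[of "u t"] unfolding orthonormal_def by auto
    finally show ?thesis .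
  qed
  have C0: "C t \<ge> 0" for t unfolding C_def a_def by (auto intro: sum_nonneg)
  have sC: "(\<Sum>t<D. C t) = n"
  proof -
    have "(\<Sum>t<D. C t) = (\<Sum>l<n. \<Sum>t<D. a t l)" unfolding C_def by (rule sum.swap)
    also have "\<dots> = (\<Sum>l<n. nsq (w l))" unfolding a_def using parseval[OF u wc] by simp
    also have "\<dots> = (\<Sum>l<n. 1)"
      using w ip_self unfolding orthonormal_def by (intro sum.cong refl) (metis lessThan_iff of_real_eq_1_iff)
    finally show ?thesis by simp
  qed
  have "chi n T \<le> (\<Sum>t<D. lam t * C t)"
    unfolding chi by (rule threshold[where I="{..<D}"]) (use S n C0 C1 sC in auto)
  also have "\<dots> = (\<Sum>l<n. \<Sum>t<D. lam t * a t l)"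
    unfolding C_def by (simp add: sum_distrib_left sum.swap[of _ "{..<n}"])
  also have "\<dots> = (\<Sum>l<n. Re (ip (w l) (T *\<^sub>v w l)))" using tm by simp
  finally show ?thesis .
qed



definition slice :: "nat \<Rightarrow> complex vec \<Rightarrow> nat \<Rightarrow> complex vec" where
  "slice D x i = vec D (\<lambda>j. x $ (i*D + j))"

lemma idx_lt: fixes i j D :: nat assumes "i < D" "j < D" shows "i*D + j < D*D"
proof -
  have "i*D + j < i*D + D" using assms(2) by (rule add_strict_left_mono)
  also have "\<dots> = (i+1)*D" by simp
  also have "\<dots> \<le> D*D" using assms by (intro mult_le_mono1) simp
  finally show ?thesis .
qed

lemma idx_div: "j < D \<Longrightarrow> (i*D + j) div D = i" for i j D :: nat
proof -
  assume j: "j < D" hence "D \<noteq> 0" by auto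
  thus ?thesis using j by (simp add: add.commute[of "i*D" j])
qed
lemma idx_mod: "j < D \<Longrightarrow> (i*D + j) mod D = j" for i j D :: nat
proof -
  assume j: "j < D" hence "D \<noteq> 0" by auto
  thus ?thesis using j by (simp add: add.commute[of "i*D" j])
qed

lemma sum_pairs: "(\<Sum>p<m*D. f p) = (\<Sum>i<m. \<Sum>j<D. f (i*D + j))" for m D :: nat
proof (induction m)
  case 0 thus ?case by simp
next
  case (Suc m)
  have "(\<Sum>p<Suc m * D. f p) = (\<Sum>p<m*D + D. f p)" by (simp add: add.commute)
  also have "\<dots> = (\<Sum>p<m*D. f p) + (\<Sum>a<D. f (m*D + a))" by (rule sum_split_nat)
  also have "\<dots> = (\<Sum>i<Suc m. \<Sum>j<D. f (i*D + j))" using Suc.IH by simp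
  finally show ?case .
qed

lemma nsq_slices: assumes x: "x \<in> carrier_vec (D*D)"
  shows "nsq x = (\<Sum>i<D. nsq (slice D x i))"
  unfolding nsq_def slice_def using x sum_pairs[of "\<lambda>p. (cmod (x $ p))^2" D D] by simp

lemma ptrace_outer_entry:
  assumes x: "x \<in> carrier_vec (D*D)" and j: "j < D" "j' < D"
  shows "ptrace_A D D (outer x) $$ (j,j') = (\<Sum>i<D. x $ (i*D+j) * cnj (x $ (i*D+j')))"
  unfolding ptrace_A_def outer_def using x j by (auto simp: idx_lt intro!: sum.cong)

lemma ptrace_outer_carrier: "ptrace_A D D M \<in> carrier_mat D D"
  unfolding ptrace_A_def by simp

lemma herm_ptrace: assumes x: "x \<in> carrier_vec (D*D)" shows "herm D (ptrace_A D D (outer x))"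
  unfolding herm_def using ptrace_outer_carrier
  by (simp add: ptrace_outer_entry[OF x] mult.commute)

lemma qf_ptrace:
  assumes x: "x \<in> carrier_vec (D*D)" and w: "w \<in> carrier_vec D"
  shows "ip w (ptrace_A D D (outer x) *\<^sub>v w) = complex_of_real (\<Sum>i<D. (cmod (ip w (slice D x i)))^2)"
proof -
  let ?r = "ptrace_A D D (outer x)"
  have rw: "(?r *\<^sub>v w) $ j = (\<Sum>j'<D. (\<Sum>i<D. x $ (i*D+j) * cnj (x $ (i*D+j'))) * w$j')" if j: "j < D" for j
    using mult_mat_vec_index[OF ptrace_outer_carrier w j] ptrace_outer_entry[OF x j] by simp
  have "ip w (?r *\<^sub>v w) = (\<Sum>j<D. cnj (w$j) * (\<Sum>j'<D. (\<Sum>i<D. x $ (i*D+j) * cnj (x $ (i*D+j'))) * w$j'))"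
  proof -
    have dr: "dim_vec (?r *\<^sub>v w) = D" by (simp add: ptrace_A_def)
    show ?thesis unfolding ip_def dr by (intro sum.cong refl) (simp add: rw del: index_mult_mat_vec)
  qed
  also have "\<dots> = (\<Sum>j<D. \<Sum>j'<D. \<Sum>i<D. cnj (w$j) * x $ (i*D+j) * (cnj (x $ (i*D+j')) * w$j'))"
    by (simp add: sum_distrib_left sum_distrib_right ac_simps)
  also have "\<dots> = (\<Sum>j<D. \<Sum>i<D. \<Sum>j'<D. cnj (w$j) * x $ (i*D+j) * (cnj (x $ (i*D+j')) * w$j'))"
    by (intro sum.cong refl sum.swap)
  also have "\<dots> = (\<Sum>i<D. \<Sum>j<D. \<Sum>j'<D. cnj (w$j) * x $ (i*D+j) * (cnj (x $ (i*D+j')) * w$j'))"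
    by (rule sum.swap)
  also have "\<dots> = (\<Sum>i<D. (\<Sum>j<D. cnj (w$j) * x $ (i*D+j)) * (\<Sum>j'<D. cnj (x $ (i*D+j')) * w$j'))"
    by (simp add: sum_product)
  also have "\<dots> = (\<Sum>i<D. ip w (slice D x i) * cnj (ip w (slice D x i)))"
    unfolding ip_def slice_def by (simp add: mult.commute)
  also have "\<dots> = complex_of_real (\<Sum>i<D. (cmod (ip w (slice D x i)))^2)"
    by (simp only: of_real_sum complex_norm_square)
  finally show ?thesis .
qed

lemma kron_entry:
  assumes A: "A \<in> carrier_mat D D" and B: "B \<in> carrier_mat D D"
    and idx: "a < D" "b < D" "i < D" "j < D"
  shows "kron A B $$ (a*D+b, i*D+j) = A $$ (a,i) * B $$ (b,j)"
  unfolding kron_def using A B idx by (simp add: idx_lt idx_div idx_mod)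

lemma kron_carrier: "A \<in> carrier_mat D D \<Longrightarrow> B \<in> carrier_mat D D \<Longrightarrow> kron A B \<in> carrier_mat (D*D) (D*D)"
  unfolding kron_def by simp

lemma kron_vec_slice:
  assumes A: "A \<in> carrier_mat D D" and B: "B \<in> carrier_mat D D" and x: "x \<in> carrier_vec (D*D)"
    and a: "a < D"
  shows "slice D (kron A B *\<^sub>v x) a = vec D (\<lambda>b. \<Sum>i<D. A $$ (a,i) * (B *\<^sub>v slice D x i) $ b)"
proof (rule eq_vecI)
  fix b assume "b < dim_vec (vec D (\<lambda>b. \<Sum>i<D. A $$ (a,i) * (B *\<^sub>v slice D x i) $ b))"
  hence b: "b < D" by simp
  have K: "kron A B \<in> carrier_mat (D*D) (D*D)" using kron_carrier[OF A B] .
  have "slice D (kron A B *\<^sub>v x) a $ b = (kron A B *\<^sub>v x) $ (a*D+b)" unfolding slice_def using b by simp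
  also have "\<dots> = (\<Sum>p<D*D. kron A B $$ (a*D+b, p) * x $ p)"
    using K x idx_lt[OF a b] by (simp add: mult_mat_vec_index del: index_mult_mat_vec)
  also have "\<dots> = (\<Sum>i<D. \<Sum>j<D. kron A B $$ (a*D+b, i*D+j) * x $ (i*D+j))" by (rule sum_pairs)
  also have "\<dots> = (\<Sum>i<D. \<Sum>j<D. A $$ (a,i) * (B $$ (b,j) * x $ (i*D+j)))"
    using kron_entry[OF A B] a b by (intro sum.cong refl) simp
  also have "\<dots> = (\<Sum>i<D. A $$ (a,i) * (B *\<^sub>v slice D x i) $ b)"
    using B b by (intro sum.cong refl) (simp add: mult_mat_vec_index slice_def sum_distrib_left del: index_mult_mat_vec)
  finally show "slice D (kron A B *\<^sub>v x) a $ b = vec D (\<lambda>b. \<Sum>i<D. A $$ (a,i) * (B *\<^sub>v slice D x i) $ b) $ b"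
    using b by simp
qed (simp add: slice_def)

lemma outer_conj:
  assumes M: "M \<in> carrier_mat m m" and x: "x \<in> carrier_vec m"
  shows "M * outer x * adj M = outer (M *\<^sub>v x)"
proof -
  have O: "outer x \<in> carrier_mat m m" using x unfolding outer_def by simp
  have adjM: "adj M \<in> carrier_mat m m" using M unfolding adj_def by simp
  have Mx: "M * outer x = mat m m (\<lambda>(p,s). (M *\<^sub>v x) $ p * cnj (x $ s))"
  proof (rule eq_matI)
    fix p s assume ps: "p < dim_row (mat m m (\<lambda>(p,s). (M *\<^sub>v x) $ p * cnj (x $ s)))"
      "s < dim_col (mat m m (\<lambda>(p,s). (M *\<^sub>v x) $ p * cnj (x $ s)))"
    hence p: "p < m" and s: "s < m" by auto
    have "(M * outer x) $$ (p,s) = (\<Sum>r<m. M $$ (p,r) * (x $ r * cnj (x $ s)))"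
      using M x p s by (simp add: outer_def scalar_prod_def atLeast0LessThan)
    also have "\<dots> = (M *\<^sub>v x) $ p * cnj (x $ s)"
      using M x p by (simp add: mult_mat_vec_index sum_distrib_left sum_distrib_right ac_simps del: index_mult_mat_vec)
    finally show "(M * outer x) $$ (p,s) = mat m m (\<lambda>(p,s). (M *\<^sub>v x) $ p * cnj (x $ s)) $$ (p,s)"
      using p s by simp
  qed (use M O in auto)
  show ?thesis
  proof (rule eq_matI)
    fix p q assume pq: "p < dim_row (outer (M *\<^sub>v x))" "q < dim_col (outer (M *\<^sub>v x))"
    hence p: "p < m" and q: "q < m" using M by (auto simp: outer_def)
    have "(M * outer x * adj M) $$ (p,q) = (\<Sum>s<m. (M *\<^sub>v x) $ p * cnj (x $ s) * cnj (M $$ (q,s)))"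
      unfolding Mx using M adjM p q by (simp add: adj_def scalar_prod_def atLeast0LessThan)
    also have "\<dots> = (M *\<^sub>v x) $ p * cnj ((M *\<^sub>v x) $ q)"
      using M x q by (simp add: mult_mat_vec_index sum_distrib_left ac_simps del: index_mult_mat_vec)
    also have "\<dots> = outer (M *\<^sub>v x) $$ (p,q)" using M p q by (simp add: outer_def)
    finally show "(M * outer x * adj M) $$ (p,q) = outer (M *\<^sub>v x) $$ (p,q)" .
  qed (use M adjM O in \<open>auto simp: outer_def\<close>)
qed

lemma ip_adj:
  assumes M: "M \<in> carrier_mat m n" and x: "x \<in> carrier_vec n" and y: "y \<in> carrier_vec m"
  shows "ip x (adj M *\<^sub>v y) = ip (M *\<^sub>v x) y"
proof -
  have adjM: "adj M \<in> carrier_mat n m" using M unfolding adj_def by simp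
  have rw: "(adj M *\<^sub>v y) $ i = (\<Sum>j<m. cnj (M $$ (j,i)) * y $ j)" if i: "i < n" for i
    using adjM M y i by (simp add: adj_def scalar_prod_def atLeast0LessThan)
  have "ip x (adj M *\<^sub>v y) = (\<Sum>i<n. cnj (x $ i) * (\<Sum>j<m. cnj (M $$ (j,i)) * y $ j))"
    unfolding ip_def using adjM rw by simp
  also have "\<dots> = (\<Sum>i<n. \<Sum>j<m. cnj (M $$ (j,i)) * cnj (x $ i) * y $ j)"
    by (simp add: sum_distrib_left ac_simps)
  also have "\<dots> = (\<Sum>j<m. \<Sum>i<n. cnj (M $$ (j,i)) * cnj (x $ i) * y $ j)" by (rule sum.swap)
  also have "\<dots> = (\<Sum>j<m. cnj ((M *\<^sub>v x) $ j) * y $ j)"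
  proof (intro sum.cong refl)
    fix j assume "j \<in> {..<m}"
    hence "(M *\<^sub>v x) $ j = (\<Sum>i<n. M$$(j,i) * x$i)" using M x by (simp add: scalar_prod_def atLeast0LessThan)
    thus "(\<Sum>i<n. cnj (M $$ (j,i)) * cnj (x $ i) * y $ j) = cnj ((M *\<^sub>v x) $ j) * y $ j"
      by (simp add: sum_distrib_right)
  qed
  also have "\<dots> = ip (M *\<^sub>v x) y" unfolding ip_def using y by simp
  finally show ?thesis .
qed

lemma kron_adj:
  assumes A: "A \<in> carrier_mat D D" and B: "B \<in> carrier_mat D D"
  shows "kron (adj A * A) (adj B * B) = adj (kron A B) * kron A B"
proof -
  have K: "kron A B \<in> carrier_mat (D*D) (D*D)" using kron_carrier[OF A B] .
  have AA: "adj A * A \<in> carrier_mat D D" and BB: "adj B * B \<in> carrier_mat D D"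
    using A B unfolding adj_def by auto
  have KK: "kron (adj A * A) (adj B * B) \<in> carrier_mat (D*D) (D*D)" using kron_carrier[OF AA BB] .
  have adjK: "adj (kron A B) \<in> carrier_mat (D*D) (D*D)" using K unfolding adj_def by simp
  show ?thesis
  proof (rule eq_matI)
    fix P Q assume PQ: "P < dim_row (adj (kron A B) * kron A B)" "Q < dim_col (adj (kron A B) * kron A B)"
    hence P: "P < D*D" and Q: "Q < D*D" using adjK K by auto
    hence D0: "0 < D" by (cases D) auto
    define a b i j where "a = P div D" "b = P mod D" "i = Q div D" "j = Q mod D"
    have ab: "a < D" "b < D" "i < D" "j < D" "P = a*D+b" "Q = i*D+j"
      using P Q D0 unfolding a_b_i_j_def by (auto simp: less_mult_imp_div_less)
    have "kron (adj A * A) (adj B * B) $$ (P,Q) = (adj A * A) $$ (a,i) * (adj B * B) $$ (b,j)"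
      unfolding ab(5,6) by (rule kron_entry[OF AA BB ab(1-4)])
    also have "\<dots> = (\<Sum>c<D. cnj (A $$ (c,a)) * A $$ (c,i)) * (\<Sum>d<D. cnj (B $$ (d,b)) * B $$ (d,j))"
      using A B ab by (simp add: adj_def scalar_prod_def atLeast0LessThan)
    also have "\<dots> = (\<Sum>c<D. \<Sum>d<D. cnj (A $$ (c,a) * B $$ (d,b)) * (A $$ (c,i) * B $$ (d,j)))"
      unfolding sum_product by (intro sum.cong refl) (simp add: ac_simps)
    also have "\<dots> = (\<Sum>c<D. \<Sum>d<D. cnj (kron A B $$ (c*D+d, a*D+b)) * kron A B $$ (c*D+d, i*D+j))"
      by (intro sum.cong refl) (simp add: kron_entry[OF A B] ab(1-4))
    also have "\<dots> = (\<Sum>r<D*D. cnj (kron A B $$ (r, P)) * kron A B $$ (r, Q))"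
      unfolding ab(5,6) by (rule sum_pairs[symmetric])
    also have "\<dots> = (adj (kron A B) * kron A B) $$ (P,Q)"
      using K adjK P Q by (simp add: adj_def scalar_prod_def atLeast0LessThan)
    finally show "kron (adj A * A) (adj B * B) $$ (P,Q) = (adj (kron A B) * kron A B) $$ (P,Q)" .
  qed (use KK adjK K in auto)
qed



lemma ip_msum:
  assumes K: "finite K" and f: "\<And>k. k \<in> K \<Longrightarrow> f k \<in> carrier_mat d d" and x: "x \<in> carrier_vec d"
  shows "ip x (msum d f K *\<^sub>v x) = (\<Sum>k\<in>K. ip x (f k *\<^sub>v x))"
proof -
  have rw: "(msum d f K *\<^sub>v x) $ p = (\<Sum>k\<in>K. (f k *\<^sub>v x) $ p)" if p: "p < d" for p
  proof -
    have "(msum d f K *\<^sub>v x) $ p = (\<Sum>q<d. (\<Sum>k\<in>K. f k $$ (p,q)) * x $ q)"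
      using p x by (simp add: msum_def scalar_prod_def atLeast0LessThan)
    also have "\<dots> = (\<Sum>q<d. \<Sum>k\<in>K. f k $$ (p,q) * x $ q)" by (simp add: sum_distrib_right)
    also have "\<dots> = (\<Sum>k\<in>K. \<Sum>q<d. f k $$ (p,q) * x $ q)" by (rule sum.swap)
    also have "\<dots> = (\<Sum>k\<in>K. (f k *\<^sub>v x) $ p)"
    proof (intro sum.cong refl)
      fix k assume "k \<in> K"
      thus "(\<Sum>q<d. f k $$ (p,q) * x $ q) = (f k *\<^sub>v x) $ p"
        using mult_mat_vec_index[OF f[OF \<open>k \<in> K\<close>] x p] by simp
    qed
    finally show ?thesis .
  qed
  have dm: "dim_vec (msum d f K *\<^sub>v x) = d" by (simp add: msum_def)
  have "ip x (msum d f K *\<^sub>v x) = (\<Sum>p<d. cnj (x $ p) * (\<Sum>k\<in>K. (f k *\<^sub>v x) $ p))"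
    unfolding ip_def dm by (intro sum.cong refl) (simp add: rw del: index_mult_mat_vec)
  also have "\<dots> = (\<Sum>p<d. \<Sum>k\<in>K. cnj (x $ p) * (f k *\<^sub>v x) $ p)" by (simp add: sum_distrib_left)
  also have "\<dots> = (\<Sum>k\<in>K. \<Sum>p<d. cnj (x $ p) * (f k *\<^sub>v x) $ p)" by (rule sum.swap)
  also have "\<dots> = (\<Sum>k\<in>K. ip x (f k *\<^sub>v x))"
    unfolding ip_def using f by (intro sum.cong refl) auto
  finally show ?thesis .
qed

lemma nsq_zero: assumes x: "x \<in> carrier_vec m" and z: "nsq x = 0" and i: "i < m" shows "x $ i = 0"
proof -
  have "\<forall>i\<in>{..<m}. (cmod (x $ i))^2 = 0"
    using z x unfolding nsq_def by (subst sum_nonneg_eq_0_iff[symmetric]) auto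
  thus ?thesis using i by simp
qed

lemma cauchy_schwarz:
  assumes x: "x \<in> carrier_vec m" and y: "y \<in> carrier_vec m"
  shows "(cmod (ip x y))^2 \<le> nsq x * nsq y"
proof (cases "nsq x = 0")
  case True
  hence "ip x y = 0" unfolding ip_def using nsq_zero[OF x True] y by simp
  thus ?thesis by (simp add: nsq_nonneg)
next
  case False
  hence nx: "nsq x > 0" using nsq_nonneg[of x] by simp
  have m: "1 \<le> m" using False x unfolding nsq_def by (cases m) auto
  define e where "e = complex_of_real (1 / sqrt (nsq x)) \<cdot>\<^sub>v x"
  have ec: "e \<in> carrier_vec m" using x unfolding e_def by simp
  have ee: "ip e e = 1"
  proof -
    have "(cmod (complex_of_real (1 / sqrt (nsq x))))^2 = 1 / nsq x" using nx
      by (simp add: norm_divide power_divide real_sqrt_pow2 less_imp_le)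
    thus ?thesis unfolding e_def ip_self nsq_smult using nx by simp
  qed
  have o: "orthonormal m 1 (\<lambda>_. e)" unfolding orthonormal_def using ec ee by auto
  have "(cmod (ip e y))^2 \<le> nsq y" using bessel[OF o m y] by simp
  moreover have "ip e y = complex_of_real (1 / sqrt (nsq x)) * ip x y"
    unfolding e_def using x y by (simp add: ip_smult_left)
  moreover have "(cmod (complex_of_real (1 / sqrt (nsq x)) * ip x y))^2 = (cmod (ip x y))^2 / nsq x"
    using nx by (simp add: norm_mult norm_divide power_mult_distrib power_divide real_sqrt_pow2 less_imp_le)
  ultimately have "(cmod (ip x y))^2 / nsq x \<le> nsq y" by simp
  thus ?thesis using nx by (simp add: divide_le_eq mult.commute)
qed

lemma vnorm_nsq: "vnorm w = sqrt (nsq w)" unfolding vnorm_def nsq_def by simp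

lemma opnorm_bound:
  assumes R: "R \<in> carrier_mat m m" and x: "x \<in> carrier_vec m"
  shows "vnorm (R *\<^sub>v x) \<le> opnorm R * vnorm x"
proof -
  define Set where "Set = {vnorm (R *\<^sub>v w) | w. w \<in> carrier_vec (dim_col R) \<and> vnorm w = 1}"
  define Bd where "Bd = sqrt (\<Sum>p<m. (\<Sum>q<m. cmod (R $$ (p,q)))^2)"
  have bdd: "bdd_above Set"
  proof (rule bdd_aboveI)
    fix s assume "s \<in> Set"
    then obtain w where w: "w \<in> carrier_vec m" "vnorm w = 1" "s = vnorm (R *\<^sub>v w)"
      unfolding Set_def using R by auto
    have nw: "nsq w = 1" using w(2) unfolding vnorm_nsq using nsq_nonneg[of w] by simp
    have wq: "cmod (w $ q) \<le> 1" if q: "q < m" for q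
    proof -
      have "(cmod (w $ q))^2 \<le> nsq w" unfolding nsq_def
        by (rule member_le_sum[where f = "\<lambda>i. (cmod (w $ i))^2"]) (use q w in auto)
      thus ?thesis using nw by (simp add: power_le_one_iff abs_le_iff)
    qed
    have comp: "cmod ((R *\<^sub>v w) $ p) \<le> (\<Sum>q<m. cmod (R $$ (p,q)))" if p: "p < m" for p
    proof -
      have "cmod ((R *\<^sub>v w) $ p) = cmod (\<Sum>q<m. R $$ (p,q) * w $ q)"
        using R w p by (simp add: mult_mat_vec_index del: index_mult_mat_vec)
      also have "\<dots> \<le> (\<Sum>q<m. cmod (R $$ (p,q) * w $ q))" by (rule norm_sum)
      also have "\<dots> \<le> (\<Sum>q<m. cmod (R $$ (p,q)))"
        by (rule sum_mono) (use wq in \<open>auto simp: norm_mult intro: mult_left_le\<close>)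
      finally show ?thesis .
    qed
    have "nsq (R *\<^sub>v w) \<le> (\<Sum>p<m. (\<Sum>q<m. cmod (R $$ (p,q)))^2)"
      unfolding nsq_def using R comp by (auto intro!: sum_mono power_mono)
    thus "s \<le> Bd" unfolding w(3) vnorm_nsq Bd_def by (rule real_sqrt_le_mono)
  qed
  show ?thesis
  proof (cases "nsq x = 0")
    case True
    have "R *\<^sub>v x = 0\<^sub>v m"
      using R x nsq_zero[OF x True] by (intro eq_vecI) (auto simp: mult_mat_vec_index simp del: index_mult_mat_vec)
    hence "vnorm (R *\<^sub>v x) = 0" unfolding vnorm_def by simp
    moreover have "vnorm x = 0" unfolding vnorm_nsq True by simp
    ultimately show ?thesis by simp
  next
    case False
    hence nx: "vnorm x > 0" unfolding vnorm_nsq using nsq_nonneg[of x] by simp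
    define c where "c = 1 / vnorm x"
    have c: "c > 0" unfolding c_def using nx by simp
    define w where "w = complex_of_real c \<cdot>\<^sub>v x"
    have vw: "vnorm w = 1" unfolding w_def vnorm_nsq nsq_smult c_def using nx
      by (simp add: real_sqrt_mult vnorm_nsq[symmetric] norm_divide)
    have Rw: "vnorm (R *\<^sub>v w) = c * vnorm (R *\<^sub>v x)"
      unfolding w_def using R x c by (simp add: mult_mat_vec vnorm_nsq nsq_smult real_sqrt_mult)
    have "vnorm (R *\<^sub>v w) \<in> Set" unfolding Set_def using vw x R unfolding w_def by auto
    hence "c * vnorm (R *\<^sub>v x) \<le> opnorm R" using cSup_upper[OF _ bdd] unfolding Rw opnorm_def Set_def by simp
    thus ?thesis using nx unfolding c_def by (simp add: divide_le_eq mult.commute)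
  qed
qed

lemma nsq_comb:
  assumes u: "orthonormal D D u" and J: "J \<subseteq> {..<D}"
  shows "nsq (vec D (\<lambda>b. \<Sum>j\<in>J. c j * u j $ b)) = (\<Sum>j\<in>J. (cmod (c j))^2)"
proof -
  let ?v = "vec D (\<lambda>b. \<Sum>j\<in>J. c j * u j $ b)"
  have fJ: "finite J" using J finite_subset by blast
  have uc: "\<And>j. j \<in> J \<Longrightarrow> dim_vec (u j) = D" using u J unfolding orthonormal_def by auto
  have uv: "ip (u j) ?v = c j" if j: "j \<in> J" for j
  proof -
    have "ip (u j) ?v = (\<Sum>j'\<in>J. c j' * ip (u j) (u j'))"
      by (rule ip_lin_right) (use uc fJ j in auto)
    also have "\<dots> = (\<Sum>j'\<in>J. c j' * (if j = j' then 1 else 0))"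
      using u J j unfolding orthonormal_def by (intro sum.cong refl) (auto simp: subset_iff)
    also have "\<dots> = c j" using j fJ by (simp add: if_distrib cong: if_cong)
    finally show ?thesis .
  qed
  have "complex_of_real (nsq ?v) = ip ?v ?v" by (simp add: ip_self)
  also have "\<dots> = (\<Sum>j\<in>J. cnj (c j) * ip (u j) ?v)"
    by (rule ip_lin_left) (use uc fJ in auto)
  also have "\<dots> = (\<Sum>j\<in>J. complex_of_real ((cmod (c j))^2))" using uv by (simp add: cnj_mult_self)
  finally show ?thesis by (simp only: of_real_sum[symmetric] of_real_eq_iff)
qed



lemma adj_carrier: "A \<in> carrier_mat m n \<Longrightarrow> adj A \<in> carrier_mat n m"
  unfolding adj_def by simp

theorem theorem2:
  fixes D N n :: nat and psi :: "complex vec"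
    and A B :: "nat \<Rightarrow> complex mat"
  assumes psi: "psi \<in> carrier_vec (D * D)"
    and A: "\<And>k. k \<in> {1..N} \<Longrightarrow> A k \<in> carrier_mat D D"
    and B: "\<And>k. k \<in> {1..N} \<Longrightarrow> B k \<in> carrier_mat D D"
    and n: "1 \<le> n" "n \<le> D"
  shows "(\<Sum>k=1..N. chi n (ptrace_A D D
            (kron (A k) (B k) * outer psi * adj (kron (A k) (B k)))))
         \<le> opnorm (msum (D * D) (\<lambda>k. kron (adj (A k) * A k) (adj (B k) * B k)) {1..N})
           * chi n (ptrace_A D D (outer psi))"
proof -
  define K where "K = (\<lambda>k. kron (A k) (B k))"
  define rho where "rho = ptrace_A D D (outer psi)"
  have hrho: "herm D rho" unfolding rho_def by (rule herm_ptrace[OF psi])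
  obtain u lam S where u: "orthonormal D D u" and ev: "\<forall>j<D. rho *\<^sub>v u j = complex_of_real (lam j) \<cdot>\<^sub>v u j"
    and S: "S \<subseteq> {..<D}" "card S = n" and chi_rho: "chi n rho = (\<Sum>j\<in>S. lam j)"
    using chi_spec[OF hrho n(2)] by blast
  have uc: "\<And>j. j < D \<Longrightarrow> u j \<in> carrier_vec D" using u orthonormal_def by auto
  have fS: "finite S" using S(1) finite_subset by blast
  define c where "c = (\<lambda>i j. ip (u j) (slice D psi i))"
  define eta where "eta = vec (D*D) (\<lambda>p. \<Sum>j\<in>S. c (p div D) j * u j $ (p mod D))"
  have etac: "eta \<in> carrier_vec (D*D)" unfolding eta_def by simp
  have slicec: "\<And>x i. slice D x i \<in> carrier_vec D" unfolding slice_def by simp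
  have slice_eta: "slice D eta i = vec D (\<lambda>b. \<Sum>j\<in>S. c i j * u j $ b)" if i: "i < D" for i
    unfolding slice_def eta_def using i by (intro eq_vecI) (auto simp: idx_lt idx_div idx_mod)
  have slice_psi: "slice D psi i = vec D (\<lambda>b. \<Sum>j<D. c i j * u j $ b)" for i
    using expand_vec[OF u slicec[of psi i]] unfolding c_def .
  have A1: "nsq eta = (\<Sum>i<D. \<Sum>j\<in>S. (cmod (c i j))^2)"
    unfolding nsq_slices[OF etac]
    by (intro sum.cong refl) (simp add: slice_eta nsq_comb[OF u S(1)])
  have A2: "(\<Sum>i<D. (cmod (c i j))^2) = lam j" if j: "j \<in> S" for j
  proof -
    have jD: "j < D" using j S(1) by auto
    have "complex_of_real (\<Sum>i<D. (cmod (c i j))^2) = ip (u j) (rho *\<^sub>v u j)"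
      unfolding c_def rho_def using qf_ptrace[OF psi uc[OF jD]] by simp
    also have "\<dots> = complex_of_real (lam j) * ip (u j) (u j)" using ev jD by (simp add: ip_smult_right)
    also have "\<dots> = complex_of_real (lam j)" using u jD unfolding orthonormal_def by simp
    finally show ?thesis by (simp only: of_real_eq_iff)
  qed
  have chiA: "chi n rho = nsq eta"
  proof -
    have "nsq eta = (\<Sum>j\<in>S. \<Sum>i<D. (cmod (c i j))^2)" unfolding A1 by (rule sum.swap)
    also have "\<dots> = (\<Sum>j\<in>S. lam j)" using A2 by simp
    finally show ?thesis using chi_rho by simp
  qed
  have C: "chi n (ptrace_A D D (K k * outer psi * adj (K k))) \<le> nsq (K k *\<^sub>v eta)" if k: "k \<in> {1..N}" for k
  proof -
    have Ak: "A k \<in> carrier_mat D D" and Bk: "B k \<in> carrier_mat D D" using A B k by auto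
    have Kc: "K k \<in> carrier_mat (D*D) (D*D)" unfolding K_def by (rule kron_carrier[OF Ak Bk])
    define xi where "xi = K k *\<^sub>v psi"
    define ze where "ze = K k *\<^sub>v eta"
    have xic: "xi \<in> carrier_vec (D*D)" and zec: "ze \<in> carrier_vec (D*D)"
      using Kc psi etac unfolding xi_def ze_def by auto
    have sig: "K k * outer psi * adj (K k) = outer xi" unfolding xi_def by (rule outer_conj[OF Kc psi])
    define Sc where "Sc = {..<D} - S"
    have cSc: "card Sc = D - n" unfolding Sc_def using S fS by (simp add: card_Diff_subset)
    have fSc: "finite Sc" unfolding Sc_def by simp
    obtain g where g: "bij_betw g {0..<card Sc} Sc" using ex_bij_betw_nat_finite[OF fSc] by auto
    define z where "z = (\<lambda>j. B k *\<^sub>v u (g j))"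
    have zc: "\<forall>j<D-n. z j \<in> carrier_vec D"
    proof (intro allI impI)
      fix j assume "j < D - n"
      hence "g j \<in> Sc" using g cSc unfolding bij_betw_def by auto
      hence "g j < D" unfolding Sc_def by auto
      thus "z j \<in> carrier_vec D" unfolding z_def using Bk uc by simp
    qed
    obtain w where w: "orthonormal D n w" and wz: "\<forall>l<n. \<forall>j<D-n. ip (w l) (z j) = 0"
      using orth_ext[of n "D-n" D z] zc n by auto
    have wc: "\<And>l. l < n \<Longrightarrow> w l \<in> carrier_vec D" using w orthonormal_def by auto
    have wB: "ip (w l) (B k *\<^sub>v u j) = 0" if l: "l < n" and j: "j \<in> Sc" for l j
    proof -
      have "j \<in> g ` {0..<card Sc}" using g j unfolding bij_betw_def by auto
      then obtain j' where "j' \<in> {0..<card Sc}" "j = g j'" by blast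
      thus ?thesis using wz l cSc unfolding z_def by auto
    qed
    have Buc: "\<And>j. j \<in> {..<D} \<Longrightarrow> B k *\<^sub>v u j \<in> carrier_vec D" using Bk uc by simp
    have key: "ip (w l) (B k *\<^sub>v slice D psi i) = ip (w l) (B k *\<^sub>v slice D eta i)"
      if l: "l < n" and i: "i < D" for l i
    proof -
      have "ip (w l) (B k *\<^sub>v slice D psi i) = ip (w l) (vec D (\<lambda>b. \<Sum>j<D. c i j * (B k *\<^sub>v u j) $ b))"
        unfolding slice_psi using mat_vec_lin[OF Bk, of "{..<D}" u "c i"] uc by simp
      also have "\<dots> = (\<Sum>j<D. c i j * ip (w l) (B k *\<^sub>v u j))"
        by (rule ip_lin_right) (use Buc wc[OF l] Bk in auto)
      also have "\<dots> = (\<Sum>j\<in>S. c i j * ip (w l) (B k *\<^sub>v u j))"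
        using S(1) wB[OF l] unfolding Sc_def by (intro sum.mono_neutral_right) auto
      also have "\<dots> = ip (w l) (vec D (\<lambda>b. \<Sum>j\<in>S. c i j * (B k *\<^sub>v u j) $ b))"
        by (rule ip_lin_right[symmetric]) (use Buc wc[OF l] S(1) fS Bk in auto)
      also have "\<dots> = ip (w l) (B k *\<^sub>v slice D eta i)"
      proof -
        have "\<And>j. j \<in> S \<Longrightarrow> u j \<in> carrier_vec D" using uc S(1) by auto
        from mat_vec_lin[OF Bk this fS, where c = "c i"] show ?thesis unfolding slice_eta[OF i] by simp
      qed
      finally show ?thesis .
    qed
    have key2: "ip (w l) (slice D xi a) = ip (w l) (slice D ze a)" if l: "l < n" and a: "a < D" for l a
    proof -
      have BP: "\<And>x i. i \<in> {..<D} \<Longrightarrow> dim_vec (B k *\<^sub>v slice D x i) = D" using Bk by simp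
      have "ip (w l) (slice D xi a) = (\<Sum>i<D. A k $$ (a,i) * ip (w l) (B k *\<^sub>v slice D psi i))"
        unfolding xi_def K_def kron_vec_slice[OF Ak Bk psi a]
        by (rule ip_lin_right) (use BP wc[OF l] in auto)
      also have "\<dots> = (\<Sum>i<D. A k $$ (a,i) * ip (w l) (B k *\<^sub>v slice D eta i))"
        using key[OF l] by simp
      also have "\<dots> = ip (w l) (slice D ze a)"
        unfolding ze_def K_def kron_vec_slice[OF Ak Bk etac a]
        by (rule ip_lin_right[symmetric]) (use BP wc[OF l] in auto)
      finally show ?thesis .
    qed
    have "chi n (ptrace_A D D (outer xi)) \<le> (\<Sum>l<n. Re (ip (w l) (ptrace_A D D (outer xi) *\<^sub>v w l)))"
      by (rule kyfan[OF herm_ptrace[OF xic] n w])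
    also have "\<dots> = (\<Sum>l<n. \<Sum>a<D. (cmod (ip (w l) (slice D xi a)))^2)"
      by (intro sum.cong refl) (simp add: qf_ptrace[OF xic wc])
    also have "\<dots> = (\<Sum>l<n. \<Sum>a<D. (cmod (ip (w l) (slice D ze a)))^2)"
      using key2 by (intro sum.cong refl) simp
    also have "\<dots> = (\<Sum>a<D. \<Sum>l<n. (cmod (ip (w l) (slice D ze a)))^2)" by (rule sum.swap)
    also have "\<dots> \<le> (\<Sum>a<D. nsq (slice D ze a))"
      by (rule sum_mono) (rule bessel[OF w n(2) slicec])
    also have "\<dots> = nsq ze" using nsq_slices[OF zec] by simp
    finally show ?thesis unfolding sig ze_def .
  qed
  define R where "R = msum (D*D) (\<lambda>k. kron (adj (A k) * A k) (adj (B k) * B k)) {1..N}"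
  have Rc: "R \<in> carrier_mat (D*D) (D*D)" unfolding R_def msum_def by simp
  have ipR: "ip eta (R *\<^sub>v eta) = complex_of_real (\<Sum>k=1..N. nsq (K k *\<^sub>v eta))"
  proof -
    have "ip eta (R *\<^sub>v eta) = (\<Sum>k=1..N. ip eta (kron (adj (A k) * A k) (adj (B k) * B k) *\<^sub>v eta))"
      unfolding R_def
    proof (rule ip_msum)
      fix k assume k: "k \<in> {1..N}"
      have "adj (A k) * A k \<in> carrier_mat D D" "adj (B k) * B k \<in> carrier_mat D D"
        using A[OF k] B[OF k] adj_carrier by (auto intro!: mult_carrier_mat)
      thus "kron (adj (A k) * A k) (adj (B k) * B k) \<in> carrier_mat (D*D) (D*D)" by (rule kron_carrier)
    qed (use etac in auto)
    also have "\<dots> = (\<Sum>k=1..N. complex_of_real (nsq (K k *\<^sub>v eta)))"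
    proof (intro sum.cong refl)
      fix k assume k: "k \<in> {1..N}"
      have Ak: "A k \<in> carrier_mat D D" and Bk: "B k \<in> carrier_mat D D" using A B k by auto
      have Kc: "K k \<in> carrier_mat (D*D) (D*D)" unfolding K_def by (rule kron_carrier[OF Ak Bk])
      have KK: "K k = kron (A k) (B k)" by (simp add: K_def)
      have "kron (adj (A k) * A k) (adj (B k) * B k) *\<^sub>v eta = adj (K k) *\<^sub>v (K k *\<^sub>v eta)"
        unfolding kron_adj[OF Ak Bk] KK[symmetric]
        using Kc etac adj_carrier[OF Kc] by (simp add: assoc_mult_mat_vec)
      hence "ip eta (kron (adj (A k) * A k) (adj (B k) * B k) *\<^sub>v eta) = ip (K k *\<^sub>v eta) (K k *\<^sub>v eta)"
        using ip_adj[OF Kc etac, of "K k *\<^sub>v eta"] Kc etac by simp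
      thus "ip eta (kron (adj (A k) * A k) (adj (B k) * B k) *\<^sub>v eta) = complex_of_real (nsq (K k *\<^sub>v eta))"
        by (simp add: ip_self)
    qed
    finally show ?thesis by simp
  qed
  have Bclaim: "(\<Sum>k=1..N. nsq (K k *\<^sub>v eta)) \<le> opnorm R * nsq eta"
  proof -
    have "(\<Sum>k=1..N. nsq (K k *\<^sub>v eta)) = Re (ip eta (R *\<^sub>v eta))" using ipR by simp
    also have "\<dots> \<le> cmod (ip eta (R *\<^sub>v eta))" by (rule complex_Re_le_cmod)
    also have "\<dots> \<le> vnorm eta * vnorm (R *\<^sub>v eta)"
    proof -
      have "(cmod (ip eta (R *\<^sub>v eta)))^2 \<le> nsq eta * nsq (R *\<^sub>v eta)"
        by (rule cauchy_schwarz) (use etac Rc in auto)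
      hence "cmod (ip eta (R *\<^sub>v eta)) \<le> sqrt (nsq eta * nsq (R *\<^sub>v eta))" by (rule real_le_rsqrt)
      thus ?thesis unfolding vnorm_nsq by (simp add: real_sqrt_mult)
    qed
    also have "\<dots> \<le> vnorm eta * (opnorm R * vnorm eta)"
      by (rule mult_left_mono[OF opnorm_bound[OF Rc etac]]) (simp add: vnorm_nsq nsq_nonneg)
    also have "\<dots> = opnorm R * nsq eta"
      unfolding vnorm_nsq using nsq_nonneg[of eta] by (simp add: ac_simps)
    finally show ?thesis .
  qed
  have "(\<Sum>k=1..N. chi n (ptrace_A D D (kron (A k) (B k) * outer psi * adj (kron (A k) (B k)))))
      \<le> (\<Sum>k=1..N. nsq (K k *\<^sub>v eta))"
    using C unfolding K_def by (intro sum_mono) auto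
  also have "\<dots> \<le> opnorm R * nsq eta" by (rule Bclaim)
  also have "\<dots> = opnorm R * chi n rho" using chiA by simp
  finally show ?thesis unfolding R_def rho_def .
qed


end
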